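(* For every pacing function $\mu:\Theta\to\mathbb{R}_{\ge0}$, every $(w,B)\in\Theta$ and every $t\ge 0$, $\sup_{b:A\to\mathbb{R}_{\ge0}}\Big\{\mathbb{E}_{\alpha,\{\theta_i\}_{i=1}^{n-1}}\big[(w^T\alpha-(1+t)b(\alpha))\mathbf 1\{b(\alpha)\ge\max(r(\alpha),\{\beta^\mu(\theta_i,\alpha)\}_i)\}\big]\Big\}+tB \;=\; q^\mu(w,B,t),$ where the supremum is over measurable $b$, $\alpha\sim F$ and $\theta_1,\dots,\theta_{n-1}\sim G$ i.i.d. independent of $\alpha$, and $q^\mu(w,B,t):=(1+t)\,\mathbb{E}_{\alpha\sim F}\Big[\mathbf 1\Big\{\frac{w^T\alpha}{1+t}\ge r(\alpha)\Big\}\int_{r(\alpha)}^{\frac{w^T\alpha}{1+t}}H^\mu_\alpha(s)\,ds\Big]+tB.$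
   Context: Setting. Fix integers $n\ge 2$ and $d\ge 2$, and constants $U>0$, $B_{\min}>0$. Buyer types are $\theta=(w,B)\in\Theta:=(0,U)^d\times(B_{\min},U)$; $\Theta_w:=(0,U)^d$. Item types are $\alpha\in A\subset\mathbb{R}^d_{+}$ (strictly positive orthant); all sets carry the Lebesgue $\sigma$-algebra. $F$ is a probability distribution on $A$ with a density and $G$ a probability distribution on $\Theta$ with a density. Buyer $(w,B)$ values item $\alpha$ at $w^T\alpha$; $\omega>0$ is a constant with $w^T\alpha\le\omega$ for all $w\in\Theta_w,\alpha\in A$. Reserve prices: measurable $r:A\to(0,\infty)$. A pacing function is a measurable $\mu:\Theta\to\mathbb{R}_{\ge0}$. For $\alpha\in A$, $\lambda^\mu_\alpha$ is the distribution of $w^T\alpha/(1+\mu(w,B))$ when $(w,B)\sim G$, and $H^\mu_\alpha$ the distribution of the maximum of $n-1$ i.i.d. draws from $\lambda^\mu_\alpha$; $H^\mu_\alpha(x):=\lambda^\mu_\alpha((-\infty,x])^{n-1}$. Define $\sigma^\mu_\alpha(x)=x$ if $x<r(\alpha)$; for $x\ge r(\alpha)$, $\sigma^\mu_\alpha(x)=x-\int_{r(\alpha)}^x \frac{H^\mu_\alpha(s)}{H^\mu_\alpha(x)}ds$ if $H^\mu_\alpha(x)>0$ and $\sigma^\mu_\alpha(x)=r(\alpha)$ if $H^\mu_\alpha(x)=0$. The value-pacing-based strategy is $\beta^\mu(w,B,\alpha):=\sigma^\mu_\alpha\big(w^T\alpha/(1+\mu(w,B))\big)$. *)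

theory Defs
  imports "HOL-Probability.Probability"
begin

definition Theta :: "real \<Rightarrow> real \<Rightarrow> ((real^'d) \<times> real) set" where
  "Theta U Bmin = {(w, B). (\<forall>i. 0 < w $ i \<and> w $ i < U) \<and> Bmin < B \<and> B < U}"

definition Theta_w :: "real \<Rightarrow> (real^'d) set" where
  "Theta_w U = {w. \<forall>i. 0 < w $ i \<and> w $ i < U}"

definition lam_cdf :: "((real^'d) \<times> real) measure \<Rightarrow> ((real^'d) \<times> real \<Rightarrow> real)
    \<Rightarrow> real^'d \<Rightarrow> real \<Rightarrow> real" where
  "lam_cdf G \<mu> \<alpha> x = measure G {\<theta> \<in> space G. (fst \<theta> \<bullet> \<alpha>) / (1 + \<mu> \<theta>) \<le> x}"

definition Hcdf :: "nat \<Rightarrow> ((real^'d) \<times> real) measure \<Rightarrow> ((real^'d) \<times> real \<Rightarrow> real)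
    \<Rightarrow> real^'d \<Rightarrow> real \<Rightarrow> real" where
  "Hcdf n G \<mu> \<alpha> x = (lam_cdf G \<mu> \<alpha> x) ^ (n - 1)"

definition sigma_fn :: "nat \<Rightarrow> ((real^'d) \<times> real) measure \<Rightarrow> (real^'d \<Rightarrow> real)
    \<Rightarrow> ((real^'d) \<times> real \<Rightarrow> real) \<Rightarrow> real^'d \<Rightarrow> real \<Rightarrow> real" where
  "sigma_fn n G r \<mu> \<alpha> x =
     (if x < r \<alpha> then x
      else if Hcdf n G \<mu> \<alpha> x > 0
        then x - integral {r \<alpha>..x} (\<lambda>s. Hcdf n G \<mu> \<alpha> s / Hcdf n G \<mu> \<alpha> x)
      else r \<alpha>)"

definition beta_fn :: "nat \<Rightarrow> ((real^'d) \<times> real) measure \<Rightarrow> (real^'d \<Rightarrow> real)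
    \<Rightarrow> ((real^'d) \<times> real \<Rightarrow> real) \<Rightarrow> (real^'d) \<times> real \<Rightarrow> real^'d \<Rightarrow> real" where
  "beta_fn n G r \<mu> \<theta> \<alpha> = sigma_fn n G r \<mu> \<alpha> ((fst \<theta> \<bullet> \<alpha>) / (1 + \<mu> \<theta>))"

definition exp_payoff :: "nat \<Rightarrow> (real^'d) measure \<Rightarrow> ((real^'d) \<times> real) measure
    \<Rightarrow> (real^'d \<Rightarrow> real) \<Rightarrow> ((real^'d) \<times> real \<Rightarrow> real) \<Rightarrow> real^'d \<Rightarrow> real
    \<Rightarrow> (real^'d \<Rightarrow> real) \<Rightarrow> real" where
  "exp_payoff n F G r \<mu> w t b =
     integral\<^sup>L (F \<Otimes>\<^sub>M PiM {..<n-1} (\<lambda>_. G))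
       (\<lambda>(\<alpha>, \<theta>s). (w \<bullet> \<alpha> - (1 + t) * b \<alpha>) *
          (if b \<alpha> \<ge> Max (insert (r \<alpha>) ((\<lambda>i. beta_fn n G r \<mu> (\<theta>s i) \<alpha>) ` {..<n-1}))
           then 1 else 0))"

definition q_fn :: "nat \<Rightarrow> (real^'d) measure \<Rightarrow> ((real^'d) \<times> real) measure
    \<Rightarrow> (real^'d \<Rightarrow> real) \<Rightarrow> ((real^'d) \<times> real \<Rightarrow> real) \<Rightarrow> real^'d \<Rightarrow> real \<Rightarrow> real \<Rightarrow> real" where
  "q_fn n F G r \<mu> w B t =
     (1 + t) * integral\<^sup>L F (\<lambda>\<alpha>. (if (w \<bullet> \<alpha>) / (1 + t) \<ge> r \<alpha>
          then integral {r \<alpha>..(w \<bullet> \<alpha>) / (1 + t)} (\<lambda>s. Hcdf n G \<mu> \<alpha> s) else 0)) + t * B"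

end

theory Submission
  imports Defs
begin

definition sgm :: "(real \<Rightarrow> real) \<Rightarrow> real \<Rightarrow> real \<Rightarrow> real" where
  "sgm H r x = (if x < r then x else if H x > 0 then x - integral {r..x} (\<lambda>s. H s / H x) else r)"

lemma mono_int: "mono (H::real\<Rightarrow>real) \<Longrightarrow> H integrable_on {a..b}"
  by (rule integrable_on_mono_on) (simp add: mono_on_def monoD)

lemma int_upper: assumes "mono (H::real\<Rightarrow>real)" "a \<le> b" shows "integral {a..b} H \<le> (b - a) * H b"
proof -
  have "integral {a..b} H \<le> integral {a..b} (\<lambda>s. H b)"
    by (rule integral_le) (use assms in \<open>auto simp: mono_int monoD\<close>)
  then show ?thesis using assms by simp
qed

lemma int_lower: assumes "mono (H::real\<Rightarrow>real)" "a \<le> b" shows "(b - a) * H a \<le> integral {a..b} H"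
proof -
  have "integral {a..b} (\<lambda>s. H a) \<le> integral {a..b} H"
    by (rule integral_le) (use assms in \<open>auto simp: mono_int monoD\<close>)
  then show ?thesis using assms by simp
qed

lemma int_comb: assumes "mono (H::real\<Rightarrow>real)" "a \<le> b" "b \<le> c"
  shows "integral {a..c} H = integral {a..b} H + integral {b..c} H"
  using Henstock_Kurzweil_Integration.integral_combine[OF assms(2,3) mono_int[OF assms(1)]] by simp

lemma int_nonneg: assumes "\<And>s. 0 \<le> (H::real\<Rightarrow>real) s" "mono H" shows "0 \<le> integral {a..b} H"
  by (rule integral_nonneg) (use assms mono_int in auto)

lemma sgm_pos_eq: "\<not> x < r \<Longrightarrow> H x > 0 \<Longrightarrow> sgm H r x = x - integral {r..x} H / H x"
  by (simp add: sgm_def)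

lemma sgm_le: assumes "mono (H::real\<Rightarrow>real)" "\<And>s. 0 \<le> H s" shows "sgm H r x \<le> x"
  using int_nonneg[OF assms(2,1)] by (auto simp: sgm_def divide_nonneg_pos)

lemma sgm_ge: assumes "mono (H::real\<Rightarrow>real)" "\<And>s. 0 \<le> H s" "r \<le> x" shows "r \<le> sgm H r x"
proof (cases "H x > 0")
  case True
  have "integral {r..x} H \<le> (x - r) * H x" by (rule int_upper) (use assms in auto)
  then have "integral {r..x} H / H x \<le> x - r" using True by (simp add: divide_le_eq)
  then show ?thesis using True assms by (simp add: sgm_pos_eq)
qed (use assms in \<open>auto simp: sgm_def\<close>)

lemma sgm_mono: assumes "mono (H::real\<Rightarrow>real)" "\<And>s. 0 \<le> H s" "x \<le> y" shows "sgm H r x \<le> sgm H r y"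
proof -
  consider "y < r" | "x < r" "r \<le> y" | "r \<le> x" by linarith
  then show ?thesis
  proof cases
    case 1 then show ?thesis using assms by (simp add: sgm_def)
  next
    case 2 then show ?thesis using sgm_ge[OF assms(1,2) 2(2)] by (simp add: sgm_def)
  next
    case 3
    show ?thesis
    proof (cases "H x > 0")
      case False
      then show ?thesis using sgm_ge[OF assms(1,2), of r y] 3 assms by (simp add: sgm_def)
    next
      case True
      have Hxy: "H x \<le> H y" using assms monoD by blast
      then have Hy: "H y > 0" using True by simp
      have Ix: "0 \<le> integral {r..x} H" by (rule int_nonneg) (use assms in auto)
      have c: "integral {r..y} H = integral {r..x} H + integral {x..y} H" by (rule int_comb) (use assms 3 in auto)
      have u: "integral {x..y} H \<le> (y - x) * H y" by (rule int_upper) (use assms in auto)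
      have u2: "integral {x..y} H / H y \<le> y - x" using u Hy by (simp add: divide_le_eq mult.commute)
      have "integral {r..y} H / H y \<le> integral {r..x} H / H y + (y - x)"
        using c u2 by (simp add: add_divide_distrib)
      also have "integral {r..x} H / H y \<le> integral {r..x} H / H x"
        using Ix True Hxy by (simp add: divide_left_mono)
      finally show ?thesis using 3 assms True Hy by (simp add: sgm_pos_eq)
    qed
  qed
qed

lemma sgm_key: assumes "mono (H::real\<Rightarrow>real)" "\<And>s. 0 \<le> H s" "sgm H r z \<le> c" "r \<le> c" "c \<le> v"
  shows "(v - c) * H z \<le> integral {r..v} H"
proof -
  have rv: "r \<le> v" using assms by simp
  consider "z < r" | "r \<le> z" "H z \<le> 0" | "r \<le> z" "H z > 0" by linarith
  then show ?thesis
  proof cases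
    case 1
    have "H z \<le> H r" using 1 assms monoD by (metis less_imp_le)
    then have "(v - c) * H z \<le> (v - r) * H r"
      using assms by (intro mult_mono) auto
    also have "\<dots> \<le> integral {r..v} H" by (rule int_lower) (use assms rv in auto)
    finally show ?thesis .
  next
    case 2
    then have "H z = 0" using assms(2) by (metis antisym)
    then show ?thesis using int_nonneg[OF assms(2,1)] by simp
  next
    case 3
    have s: "sgm H r z = z - integral {r..z} H / H z" using 3 by (simp add: sgm_pos_eq)
    have "(v - c) * H z \<le> (v - sgm H r z) * H z" using assms 3 by (intro mult_right_mono) auto
    also have "\<dots> = (v - z) * H z + integral {r..z} H" using 3 s by (simp add: field_simps)
    also have "\<dots> \<le> integral {r..v} H"
    proof (cases "z \<le> v")
      case True
      have "integral {r..v} H = integral {r..z} H + integral {z..v} H" by (rule int_comb) (use assms 3 True in auto)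
      moreover have "(v - z) * H z \<le> integral {z..v} H" by (rule int_lower) (use assms True in auto)
      ultimately show ?thesis by simp
    next
      case False
      have "integral {r..z} H = integral {r..v} H + integral {v..z} H" by (rule int_comb) (use assms rv False in auto)
      moreover have "integral {v..z} H \<le> (z - v) * H z" by (rule int_upper) (use assms False in auto)
      ultimately show ?thesis by (simp add: algebra_simps)
    qed
    finally show ?thesis .
  qed
qed

lemma sgm_opt: assumes "mono (H::real\<Rightarrow>real)" "\<And>s. 0 \<le> H s" "r \<le> v"
  shows "(v - sgm H r v) * H v = integral {r..v} H"
proof (cases "H v > 0")
  case True
  then show ?thesis using assms by (simp add: sgm_pos_eq)
next
  case False
  then have H0: "H v = 0" using assms(2) by (metis antisym not_less)
  have "integral {r..v} H \<le> (v - r) * H v" by (rule int_upper) (use assms in auto)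
  moreover have "0 \<le> integral {r..v} H" by (rule int_nonneg) (use assms in auto)
  ultimately show ?thesis using H0 by simp
qed



lemma down_bound:
  fixes X :: "'a \<Rightarrow> real" and \<sigma> :: "real \<Rightarrow> real"
  assumes PG: "prob_space G" and Xm: "X \<in> borel_measurable G" and sm: "mono \<sigma>"
    and vc: "0 \<le> v - c" and K0: "0 \<le> K" and m0: "0 < m" and m0: "0 < m"
    and Q: "\<And>z. \<sigma> z \<le> c \<Longrightarrow> (v - c) * measure G {\<theta>\<in>space G. X \<theta> \<le> z} ^ m \<le> K"
    and z0: "measure G {\<theta>\<in>space G. X \<theta> \<le> z0} = 1"
  shows "(v - c) * measure G {\<theta>\<in>space G. \<sigma> (X \<theta>) \<le> c} ^ m \<le> K"
proof -
  interpret prob_space G by fact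
  have [measurable]: "\<sigma> \<in> borel_measurable borel" using sm by (rule borel_measurable_mono)
  note Xm[measurable]
  let ?P = "measure G {\<theta>\<in>space G. \<sigma> (X \<theta>) \<le> c}"
  have P01: "0 \<le> ?P" "?P \<le> 1" by auto
  have main: "(v - c) * p ^ m \<le> K" if "0 \<le> p" "p \<le> q" "(v - c) * q ^ m \<le> K" for p q
  proof -
    have "(v - c) * p ^ m \<le> (v - c) * q ^ m" using that vc by (intro mult_left_mono power_mono) auto
    then show ?thesis using that by linarith
  qed
  show ?thesis
  proof (cases "\<forall>z. \<sigma> z \<le> c")
    case True
    then have "(v - c) * 1 ^ m \<le> K" using Q[of z0] z0 by simp
    then show ?thesis using main[OF P01(1,2)] by simp
  next
    case False
    let ?T = "{z. c < \<sigma> z}"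
    show ?thesis
    proof (cases "bdd_below ?T")
      case nb: False
      have "\<forall>z. c < \<sigma> z"
      proof
        fix z
        from nb obtain t where "t \<in> ?T" "t < z" unfolding bdd_below_def by (meson not_le)
        then have "c < \<sigma> t" "\<sigma> t \<le> \<sigma> z" using sm by (auto simp: monoD)
        then show "c < \<sigma> z" by linarith
      qed
      then have "{\<theta>\<in>space G. \<sigma> (X \<theta>) \<le> c} = {}" using leD by blast
      then have "?P = 0" by (simp only:) simp
      then show ?thesis using K0 m0 by (simp add: zero_power)
    next
      case bb: True
      have Tne: "?T \<noteq> {}" using False not_le by blast
      define y where "y = Inf ?T"
      have below: "\<sigma> z \<le> c" if zy: "z < y" for z
      proof (rule ccontr)
        assume "\<not> \<sigma> z \<le> c"
        then have "z \<in> ?T" by simp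
        then have "y \<le> z" unfolding y_def by (rule cInf_lower[OF _ bb])
        then show False using zy by simp
      qed
      have above: "c < \<sigma> z" if yz: "y < z" for z
      proof -
        have "\<exists>t\<in>?T. t < z" using cInf_less_iff[OF Tne bb] yz unfolding y_def by simp
        then obtain t where t: "c < \<sigma> t" "t < z" by auto
        have "\<sigma> t \<le> \<sigma> z" using sm t(2) by (simp add: monoD)
        then show ?thesis using t by linarith
      qed
      show ?thesis
      proof (cases "\<sigma> y \<le> c")
        case True
        have "{\<theta>\<in>space G. \<sigma> (X \<theta>) \<le> c} \<subseteq> {\<theta>\<in>space G. X \<theta> \<le> y}"
          using above leD not_le by blast
        then have "?P \<le> measure G {\<theta>\<in>space G. X \<theta> \<le> y}"
          by (intro finite_measure_mono) measurable
        then show ?thesis using main[OF P01(1) _ Q[OF True]] by simp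
      next
        case False
        define A where "A k = {\<theta>\<in>space G. X \<theta> \<le> y - inverse (real (Suc k))}" for k
        have Ameas: "range A \<subseteq> sets G" unfolding A_def by auto
        have inc: "incseq A"
          unfolding incseq_def A_def
        proof (intro allI impI subsetI)
          fix k l x assume kl: "k \<le> l" and x: "x \<in> {\<theta> \<in> space G. X \<theta> \<le> y - inverse (real (Suc k))}"
          have "inverse (real (Suc l)) \<le> inverse (real (Suc k))" by (rule le_imp_inverse_le) (use kl in auto)
          moreover have "X x \<le> y - inverse (real (Suc k))" using x by blast
          ultimately have "X x \<le> y - inverse (real (Suc l))" by linarith
          then show "x \<in> {\<theta> \<in> space G. X \<theta> \<le> y - inverse (real (Suc l))}" using x
            by blast
        qed
        have U: "(\<Union>k. A k) = {\<theta>\<in>space G. X \<theta> < y}"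
        proof (safe)
          fix x k assume "x \<in> A k"
          then have "X x \<le> y - inverse (real (Suc k))" unfolding A_def by blast
          moreover have "0 < inverse (real (Suc k))" by simp
          ultimately show "X x < y" by linarith
        next
          fix x k assume "x \<in> A k" then show "x \<in> space G" unfolding A_def by auto
        next
          fix x assume x: "x \<in> space G" "X x < y"
          obtain k where "inverse (real (Suc k)) < y - X x"
            using reals_Archimedean x(2) by (metis diff_gt_0_iff_gt)
          then show "x \<in> (\<Union>k. A k)" unfolding A_def using x by (auto intro!: exI[of _ k])
        qed
        have lim: "(\<lambda>k. measure G (A k)) \<longlonglongrightarrow> measure G {\<theta>\<in>space G. X \<theta> < y}"
          using finite_Lim_measure_incseq[OF Ameas inc] U by simp
        have lim2: "(\<lambda>k. (v - c) * measure G (A k) ^ m) \<longlonglongrightarrow> (v - c) * measure G {\<theta>\<in>space G. X \<theta> < y} ^ m"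
          by (intro tendsto_intros lim)
        have "\<forall>k. (v - c) * measure G (A k) ^ m \<le> K"
        proof
          fix k
          have "y - inverse (real (Suc k)) < y" by simp
          then show "(v - c) * measure G (A k) ^ m \<le> K" unfolding A_def by (rule Q[OF below])
        qed
        then have lt: "(v - c) * measure G {\<theta>\<in>space G. X \<theta> < y} ^ m \<le> K"
          using LIMSEQ_le_const2[OF lim2] by blast
        have "{\<theta>\<in>space G. \<sigma> (X \<theta>) \<le> c} \<subseteq> {\<theta>\<in>space G. X \<theta> < y}"
        proof safe
          fix \<theta> assume h: "\<theta> \<in> space G" "\<sigma> (X \<theta>) \<le> c"
          have "\<not> y < X \<theta>" using above[of "X \<theta>"] h(2) by linarith
          moreover have "X \<theta> \<noteq> y" using False h(2) by auto
          ultimately show "X \<theta> < y" by linarith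
        qed
        then have "?P \<le> measure G {\<theta>\<in>space G. X \<theta> < y}"
          by (intro finite_measure_mono) measurable
        then show ?thesis using main[OF P01(1) _ lt] by simp
      qed
    qed
  qed
qed



definition Xv :: "((real^'d) \<times> real \<Rightarrow> real) \<Rightarrow> (real^'d) \<times> real \<Rightarrow> real^'d \<Rightarrow> real" where
  "Xv \<mu> \<theta> \<alpha> = (fst \<theta> \<bullet> \<alpha>) / (1 + \<mu> \<theta>)"

lemma cont_leb: "continuous_on UNIV f \<Longrightarrow> (f::'a::euclidean_space \<Rightarrow> 'b::euclidean_space) \<in> borel_measurable lebesgue"
  by (rule measurable_completion) (simp add: borel_measurable_continuous_onI)

lemma X_meas:
  assumes sF: "sets F = sets (lebesgue :: (real^'d) measure)" and sG: "sets G = sets (lebesgue :: ((real^'d) \<times> real) measure)"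
    and mu: "\<mu> \<in> borel_measurable lebesgue"
  shows "(\<lambda>p. Xv \<mu> (snd p) (fst p)) \<in> borel_measurable (F \<Otimes>\<^sub>M G)"
proof -
  have [measurable]: "(\<lambda>\<theta>. fst \<theta>) \<in> borel_measurable G"
    using cont_leb[OF continuous_on_fst[OF continuous_on_id]] measurable_cong_sets[OF sG refl] by auto
  have [measurable]: "(\<lambda>\<alpha>. \<alpha>) \<in> borel_measurable F"
    using cont_leb[OF continuous_on_id] measurable_cong_sets[OF sF refl] by auto
  have [measurable]: "\<mu> \<in> borel_measurable G"
    using mu measurable_cong_sets[OF sG refl] by auto
  show ?thesis unfolding Xv_def by measurable
qed

lemma L_meas:
  assumes sF: "sets F = sets (lebesgue :: (real^'d) measure)" and sG: "sets G = sets (lebesgue :: ((real^'d) \<times> real) measure)"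
    and mu: "\<mu> \<in> borel_measurable lebesgue" and PG: "prob_space G"
  shows "(\<lambda>p. lam_cdf G \<mu> (fst p) (snd p)) \<in> borel_measurable (F \<Otimes>\<^sub>M (borel::real measure))"
proof -
  interpret prob_space G by fact
  have spG: "space G = UNIV" using sets_eq_imp_space_eq[OF sG] by simp
  have spF: "space F = UNIV" using sets_eq_imp_space_eq[OF sF] by simp
  have XM[measurable]: "(\<lambda>p. Xv \<mu> (snd p) (fst p)) \<in> borel_measurable (F \<Otimes>\<^sub>M G)"
    by (rule X_meas[OF sF sG mu])
  have "(\<lambda>q. Xv \<mu> (snd q) (fst (fst q))) \<in> borel_measurable ((F \<Otimes>\<^sub>M borel) \<Otimes>\<^sub>M G)"
    using measurable_compose[OF _ XM, of "\<lambda>q. (fst (fst q), snd q)" "(F \<Otimes>\<^sub>M borel) \<Otimes>\<^sub>M G"] by simp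
  then have Q: "{q \<in> space ((F \<Otimes>\<^sub>M borel) \<Otimes>\<^sub>M G). Xv \<mu> (snd q) (fst (fst q)) \<le> snd (fst q)}
     \<in> sets ((F \<Otimes>\<^sub>M borel) \<Otimes>\<^sub>M G)" by measurable
  have "(\<lambda>p. emeasure G (Pair p -` {q \<in> space ((F \<Otimes>\<^sub>M borel) \<Otimes>\<^sub>M G). Xv \<mu> (snd q) (fst (fst q)) \<le> snd (fst q)}))
      \<in> borel_measurable (F \<Otimes>\<^sub>M borel)"
    by (rule measurable_emeasure_Pair[OF Q])
  then have "(\<lambda>p. enn2real (emeasure G (Pair p -` {q \<in> space ((F \<Otimes>\<^sub>M borel) \<Otimes>\<^sub>M G). Xv \<mu> (snd q) (fst (fst q)) \<le> snd (fst q)})))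
      \<in> borel_measurable (F \<Otimes>\<^sub>M borel)" by measurable
  moreover have "\<And>p. Pair p -` {q \<in> space ((F \<Otimes>\<^sub>M borel) \<Otimes>\<^sub>M G). Xv \<mu> (snd q) (fst (fst q)) \<le> snd (fst q)}
     = {\<theta> \<in> space G. (fst \<theta> \<bullet> fst p) / (1 + \<mu> \<theta>) \<le> snd p}"
    by (auto simp: space_pair_measure spG spF Xv_def)
  ultimately show ?thesis unfolding lam_cdf_def measure_def by simp
qed

lemma HK_eq_L:
  fixes h :: "real \<Rightarrow> real"
  assumes hm: "h \<in> borel_measurable borel" and hb: "\<And>s. 0 \<le> h s \<and> h s \<le> 1"
  shows "integral {a..b} h = (\<integral>s. indicator {a..b} s * h s \<partial>lborel)"
proof -
  have "set_integrable lborel {a..b} h"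
    unfolding set_integrable_def
  proof (rule integrableI_bounded_set[where A="{a..b}" and B=1])
    show "(\<lambda>x. indicat_real {a..b} x *\<^sub>R h x) \<in> borel_measurable lborel" using hm by simp
    show "AE x in lborel. x \<in> {a..b} \<longrightarrow> norm (indicat_real {a..b} x *\<^sub>R h x) \<le> 1"
      using hb by (intro AE_I2) (auto simp: indicator_def)
    show "AE x in lborel. x \<notin> {a..b} \<longrightarrow> indicat_real {a..b} x *\<^sub>R h x = 0"
      by (intro AE_I2) (auto simp: indicator_def)
  qed (auto simp: emeasure_lborel_Icc_eq)
  from set_borel_integral_eq_integral(2)[OF this] show ?thesis
    by (simp add: set_lebesgue_integral_def)
qed

lemma J_meas:
  fixes h :: "'a \<Rightarrow> real \<Rightarrow> real"
  assumes Hmeas[measurable]: "(\<lambda>p. h (fst p) (snd p)) \<in> borel_measurable (F \<Otimes>\<^sub>M borel)"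
    and hb: "\<And>\<alpha> s. 0 \<le> h \<alpha> s \<and> h \<alpha> s \<le> 1" and r[measurable]: "r \<in> borel_measurable F"
  shows "(\<lambda>p. integral {r (fst p)..snd p} (h (fst p))) \<in> borel_measurable (F \<Otimes>\<^sub>M borel)"
proof -
  have hm: "h \<alpha> \<in> borel_measurable borel" if "\<alpha> \<in> space F" for \<alpha>
    using measurable_Pair2[OF Hmeas that] by simp
  have eq: "integral {r (fst p)..snd p} (h (fst p)) = (\<integral>s. indicator {r (fst p)..snd p} s * h (fst p) s \<partial>lborel)"
    if "p \<in> space (F \<Otimes>\<^sub>M borel)" for p
    using that by (intro HK_eq_L hm hb) (auto simp: space_pair_measure)
  have [measurable]: "(\<lambda>q. h (fst (fst q)) (snd q)) \<in> borel_measurable ((F \<Otimes>\<^sub>M borel) \<Otimes>\<^sub>M lborel)"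
    using measurable_compose[OF _ Hmeas, of "\<lambda>q. (fst (fst q), snd q)" "(F \<Otimes>\<^sub>M borel) \<Otimes>\<^sub>M lborel"]
    by (simp add: measurable_cong_sets[OF sets_pair_measure_cong[OF refl sets_lborel] refl])
  have "(\<lambda>p. \<integral>s. indicator {r (fst p)..snd p} s * h (fst p) s \<partial>lborel) \<in> borel_measurable (F \<Otimes>\<^sub>M borel)"
  proof (rule lborel.borel_measurable_lebesgue_integral)
    let ?N = "(F \<Otimes>\<^sub>M borel) \<Otimes>\<^sub>M lborel"
    have S: "{q\<in>space ?N. r (fst (fst q)) \<le> snd q \<and> snd q \<le> snd (fst q)} \<in> sets ?N"
      by measurable
    have "(\<lambda>q. indicator {q\<in>space ?N. r (fst (fst q)) \<le> snd q \<and> snd q \<le> snd (fst q)} q * h (fst (fst q)) (snd q) :: real) \<in> borel_measurable ?N"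
      using S by measurable
    moreover have "\<And>q. q \<in> space ?N \<Longrightarrow> indicator {q\<in>space ?N. r (fst (fst q)) \<le> snd q \<and> snd q \<le> snd (fst q)} q * h (fst (fst q)) (snd q)
       = (case q of (p, s) \<Rightarrow> indicator {r (fst p)..snd p} s * h (fst p) s)"
      by (auto simp: indicator_def split: prod.splits)
    ultimately show "(\<lambda>(p, s). indicator {r (fst p)..snd p} s * h (fst p) s) \<in> borel_measurable ?N"
      by (rule measurable_cong[THEN iffD1, rotated]) simp
  qed
  then show ?thesis by (rule measurable_cong[THEN iffD1, rotated]) (simp add: eq)
qed

theorem mainTheorem4:
  fixes n :: nat and U Bmin \<omega> :: real
    and A :: "(real^'d) set"
    and F :: "(real^'d) measure" and f :: "real^'d \<Rightarrow> ennreal"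
    and G :: "((real^'d) \<times> real) measure" and g :: "(real^'d) \<times> real \<Rightarrow> ennreal"
    and r :: "real^'d \<Rightarrow> real"
    and \<mu> :: "(real^'d) \<times> real \<Rightarrow> real"
    and w :: "real^'d" and B t :: real
  assumes n2: "n \<ge> 2" and d2: "CARD('d) \<ge> 2"
    and U_pos: "U > 0" and Bmin_pos: "Bmin > 0"
    and A_meas: "A \<in> sets lebesgue" and A_pos: "A \<subseteq> {\<alpha>. \<forall>i. 0 < \<alpha> $ i}"
    and f_meas: "f \<in> borel_measurable lebesgue" and F_def: "F = density lebesgue f"
    and F_prob: "prob_space F" and F_A: "emeasure F A = 1"
    and g_meas: "g \<in> borel_measurable lebesgue" and G_def: "G = density lebesgue g"
    and G_prob: "prob_space G" and G_Theta: "emeasure G (Theta U Bmin) = 1"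
    and omega_pos: "\<omega> > 0"
    and omega_bound: "\<forall>v\<in>Theta_w U. \<forall>\<alpha>\<in>A. v \<bullet> \<alpha> \<le> \<omega>"
    and r_meas: "r \<in> borel_measurable lebesgue" and r_pos: "\<forall>\<alpha>\<in>A. r \<alpha> > 0"
    and mu_meas: "\<mu> \<in> borel_measurable lebesgue" and mu_nonneg: "\<forall>\<theta>\<in>Theta U Bmin. \<mu> \<theta> \<ge> 0"
    and wB: "(w, B) \<in> Theta U Bmin" and t_nonneg: "t \<ge> 0"
  shows "(SUP b \<in> {b. b \<in> borel_measurable lebesgue \<and> (\<forall>\<alpha>. 0 \<le> b \<alpha>)}.
            exp_payoff n F G r \<mu> w t b) + t * B
         = q_fn n F G r \<mu> w B t"
proof -
  define m where "m = n - 1"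
  have m0: "0 < m" using n2 by (simp add: m_def)
  interpret G: prob_space G by (rule G_prob)
  interpret F: prob_space F by (rule F_prob)
  have sF: "sets F = sets (lebesgue :: (real^'d) measure)" using F_def by simp
  have sG: "sets G = sets (lebesgue :: ((real^'d) \<times> real) measure)" using G_def by simp
  have spF: "space F = UNIV" using sets_eq_imp_space_eq[OF sF] by simp
  have spG: "space G = UNIV" using sets_eq_imp_space_eq[OF sG] by simp
  define M where "M = PiM {..<m} (\<lambda>_. G)"
  interpret PP: finite_product_prob_space "\<lambda>_. G" "{..<m}" by unfold_locales auto
  interpret M: prob_space M unfolding M_def by (rule PP.prob_space_axioms)
  interpret FM: pair_sigma_finite F M by unfold_locales
  have tpos: "0 < 1 + t" using t_nonneg by simp
  define H where "H \<alpha> = Hcdf n G \<mu> \<alpha>" for \<alpha>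
  define S where "S \<alpha> x = sgm (H \<alpha>) (r \<alpha>) x" for \<alpha> x
  define Q where "Q \<alpha> = (if (w \<bullet> \<alpha>) / (1 + t) \<ge> r \<alpha> then integral {r \<alpha>..(w \<bullet> \<alpha>) / (1 + t)} (H \<alpha>) else 0)" for \<alpha>
  define Pm where "Pm \<alpha> c = measure G {\<theta> \<in> space G. S \<alpha> (Xv \<mu> \<theta> \<alpha>) \<le> c}" for \<alpha> c
  define \<psi> where "\<psi> \<alpha> c = (if r \<alpha> \<le> c then Pm \<alpha> c ^ m else 0)" for \<alpha> c
  have beta_eq: "beta_fn n G r \<mu> \<theta> \<alpha> = S \<alpha> (Xv \<mu> \<theta> \<alpha>)" for \<theta> \<alpha>
    by (simp add: beta_fn_def sigma_fn_def S_def sgm_def H_def Xv_def)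
  have Hdef: "H \<alpha> x = lam_cdf G \<mu> \<alpha> x ^ m" for \<alpha> x by (simp add: H_def Hcdf_def m_def)
  have Xm: "(\<lambda>p. Xv \<mu> (snd p) (fst p)) \<in> borel_measurable (F \<Otimes>\<^sub>M G)" by (rule X_meas[OF sF sG mu_meas])
  have Xma: "(\<lambda>\<theta>. Xv \<mu> \<theta> \<alpha>) \<in> borel_measurable G" for \<alpha>
    using measurable_Pair2[OF Xm, of \<alpha>] spF by simp
  have lam_eq: "lam_cdf G \<mu> \<alpha> x = measure G {\<theta>\<in>space G. Xv \<mu> \<theta> \<alpha> \<le> x}" for \<alpha> x
    by (simp add: lam_cdf_def Xv_def)
  have Hmono: "mono (H \<alpha>)" for \<alpha>
  proof (rule monoI)
    fix x y :: real assume "x \<le> y"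
    then have "measure G {\<theta>\<in>space G. Xv \<mu> \<theta> \<alpha> \<le> x} \<le> measure G {\<theta>\<in>space G. Xv \<mu> \<theta> \<alpha> \<le> y}"
      using Xma[of \<alpha>] by (intro G.finite_measure_mono) auto
    then show "H \<alpha> x \<le> H \<alpha> y" unfolding Hdef lam_eq by (intro power_mono) auto
  qed
  have H0: "0 \<le> H \<alpha> s" for \<alpha> s unfolding Hdef lam_cdf_def by simp
  have H1: "H \<alpha> s \<le> 1" for \<alpha> s unfolding Hdef lam_cdf_def by (simp add: power_le_one)
  have Theta_sets: "Theta U Bmin \<in> sets G" using G_Theta emeasure_notin_sets by fastforce
  have inner_nonneg: "0 \<le> v \<bullet> \<alpha>" if "v \<in> Theta_w U" "\<alpha> \<in> A" for v \<alpha> :: "real^'d"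
  proof -
    have "\<forall>i. 0 \<le> v $ i * \<alpha> $ i" using that A_pos unfolding Theta_w_def by (auto intro!: mult_nonneg_nonneg less_imp_le)
    then show ?thesis unfolding inner_vec_def by (auto intro!: sum_nonneg)
  qed
  have Lomega: "lam_cdf G \<mu> \<alpha> \<omega> = 1" if aA: "\<alpha> \<in> A" for \<alpha>
  proof -
    have sub: "Theta U Bmin \<subseteq> {\<theta>\<in>space G. Xv \<mu> \<theta> \<alpha> \<le> \<omega>}"
    proof safe
      fix v :: "real^'d" and B' :: real assume th: "(v, B') \<in> Theta U Bmin"
      then have vw: "v \<in> Theta_w U" unfolding Theta_def Theta_w_def by auto
      have mu0: "0 \<le> \<mu> (v, B')" using mu_nonneg th by auto
      have i0: "0 \<le> v \<bullet> \<alpha>" by (rule inner_nonneg[OF vw aA])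
      have iw: "v \<bullet> \<alpha> \<le> \<omega>" using omega_bound vw aA by auto
      have "(v \<bullet> \<alpha>) / (1 + \<mu> (v, B')) \<le> v \<bullet> \<alpha>" using divide_left_mono[of 1 "1 + \<mu> (v, B')" "v \<bullet> \<alpha>"] i0 mu0 by simp
      then show "Xv \<mu> (v, B') \<alpha> \<le> \<omega>" using iw by (simp add: Xv_def)
    qed (simp add: spG)
    have "1 = measure G (Theta U Bmin)" using G_Theta by (simp add: G.emeasure_eq_measure)
    also have "\<dots> \<le> measure G {\<theta>\<in>space G. Xv \<mu> \<theta> \<alpha> \<le> \<omega>}"
      using sub Xma[of \<alpha>] by (intro G.finite_measure_mono) auto
    finally show ?thesis unfolding lam_eq using G.prob_le_1 by (simp add: antisym)
  qed
  have Lm: "(\<lambda>p. lam_cdf G \<mu> (fst p) (snd p)) \<in> borel_measurable (F \<Otimes>\<^sub>M (borel::real measure))"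
    by (rule L_meas[OF sF sG mu_meas G_prob])
  have Hm[measurable]: "(\<lambda>p. H (fst p) (snd p)) \<in> borel_measurable (F \<Otimes>\<^sub>M (borel::real measure))"
    unfolding Hdef using Lm by measurable
  have rF[measurable]: "r \<in> borel_measurable F" using r_meas measurable_cong_sets[OF sF refl] by auto
  have idF[measurable]: "(\<lambda>\<alpha>. \<alpha>) \<in> borel_measurable F"
    using cont_leb[OF continuous_on_id] measurable_cong_sets[OF sF refl] by auto
  have Jm[measurable]: "(\<lambda>p. integral {r (fst p)..snd p} (H (fst p))) \<in> borel_measurable (F \<Otimes>\<^sub>M (borel::real measure))"
    by (rule J_meas[OF Hm _ rF]) (use H0 H1 in auto)
  have S_alt: "S \<alpha> x = (if x < r \<alpha> then x else if H \<alpha> x > 0 then x - integral {r \<alpha>..x} (H \<alpha>) / H \<alpha> x else r \<alpha>)" for \<alpha> x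
    by (simp add: S_def sgm_def)
  have Sm[measurable]: "(\<lambda>p. S (fst p) (snd p)) \<in> borel_measurable (F \<Otimes>\<^sub>M (borel::real measure))"
    unfolding S_alt by measurable
  have Xm2: "(\<lambda>p. (fst p, Xv \<mu> (snd p) (fst p))) \<in> (F \<Otimes>\<^sub>M G) \<rightarrow>\<^sub>M (F \<Otimes>\<^sub>M (borel::real measure))"
    using Xm by (intro measurable_Pair) auto
  have betam: "(\<lambda>p. S (fst p) (Xv \<mu> (snd p) (fst p))) \<in> borel_measurable (F \<Otimes>\<^sub>M G)"
    using measurable_compose[OF Xm2 Sm] by simp
  have vpm: "(\<lambda>\<alpha>. (\<alpha>, (w \<bullet> \<alpha>) / (1 + t))) \<in> F \<rightarrow>\<^sub>M (F \<Otimes>\<^sub>M (borel::real measure))"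
    by measurable
  have Jvp: "(\<lambda>\<alpha>. integral {r \<alpha>..(w \<bullet> \<alpha>) / (1 + t)} (H \<alpha>)) \<in> borel_measurable F"
    using measurable_compose[OF vpm Jm] by simp
  have Qm[measurable]: "Q \<in> borel_measurable F"
    unfolding Q_def using Jvp by measurable
  have inner: "(\<integral>\<theta>s. K * (if c \<ge> Max (insert (r \<alpha>) ((\<lambda>i. beta_fn n G r \<mu> (\<theta>s i) \<alpha>) ` {..<m})) then 1 else 0) \<partial>M)
      = K * \<psi> \<alpha> c" for \<alpha> K c
  proof -
    have Sma: "(\<lambda>\<theta>. S \<alpha> (Xv \<mu> \<theta> \<alpha>)) \<in> borel_measurable G" using measurable_Pair2[OF betam, of \<alpha>] spF by simp
    define Sset where "Sset = {\<theta>\<in>space G. S \<alpha> (Xv \<mu> \<theta> \<alpha>) \<le> c}"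
    have Ssets: "Sset \<in> sets G" unfolding Sset_def using Sma by measurable
    have cond: "(c \<ge> Max (insert (r \<alpha>) ((\<lambda>i. beta_fn n G r \<mu> (\<theta>s i) \<alpha>) ` {..<m})))
        \<longleftrightarrow> (r \<alpha> \<le> c \<and> (\<forall>i\<in>{..<m}. \<theta>s i \<in> Sset))" for \<theta>s
      by (simp add: beta_eq Sset_def spG Max_le_iff)
    show ?thesis
    proof (cases "r \<alpha> \<le> c")
      case False
      then show ?thesis unfolding cond \<psi>_def by simp
    next
      case True
      define E where "E = PiE {..<m} (\<lambda>_. Sset)"
      have spM: "space M = PiE {..<m} (\<lambda>_. space G)" unfolding M_def by (simp add: space_PiM)
      have Esub: "E \<subseteq> space M" unfolding E_def spM Sset_def by (auto simp: PiE_iff)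
      have ind: "(if c \<ge> Max (insert (r \<alpha>) ((\<lambda>i. beta_fn n G r \<mu> (\<theta>s i) \<alpha>) ` {..<m})) then 1 else 0) = indicator E \<theta>s"
        if "\<theta>s \<in> space M" for \<theta>s
        using that True unfolding cond E_def spM by (auto simp: PiE_iff indicator_def)
      have "(\<integral>\<theta>s. K * (if c \<ge> Max (insert (r \<alpha>) ((\<lambda>i. beta_fn n G r \<mu> (\<theta>s i) \<alpha>) ` {..<m})) then 1 else 0) \<partial>M)
          = (\<integral>\<theta>s. K * indicator E \<theta>s \<partial>M)"
        by (rule Bochner_Integration.integral_cong[OF refl], rule arg_cong[where f="(*) K"], rule ind)
      also have "\<dots> = K * measure M E" using Esub by (simp add: Int_absorb2)
      also have "measure M E = (\<Prod>i\<in>{..<m}. measure G Sset)"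
        unfolding M_def E_def by (rule PP.finite_measure_PiM_emb) (use Ssets in auto)
      also have "\<dots> = Pm \<alpha> c ^ m" by (simp add: Pm_def Sset_def)
      finally show ?thesis using True by (simp add: \<psi>_def)
    qed
  qed
  have Smono: "mono (S \<alpha>)" for \<alpha>
    unfolding S_def by (rule monoI) (rule sgm_mono[OF Hmono H0])
  have Qnn: "0 \<le> Q \<alpha>" for \<alpha>
    unfolding Q_def using int_nonneg[OF H0 Hmono] by simp
  have Pm_ge: "0 \<le> Pm \<alpha> c" for \<alpha> c unfolding Pm_def by simp
  have psinn: "0 \<le> \<psi> \<alpha> c" for \<alpha> c unfolding \<psi>_def using Pm_ge by simp
  have wsplit: "w \<bullet> \<alpha> = (1 + t) * ((w \<bullet> \<alpha>) / (1 + t))" for \<alpha> using tpos by simp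
  have UBpt: "(w \<bullet> \<alpha> - (1 + t) * c) * \<psi> \<alpha> c \<le> (1 + t) * Q \<alpha>" if aA: "\<alpha> \<in> A" for \<alpha> c
  proof -
    define vp where "vp = (w \<bullet> \<alpha>) / (1 + t)"
    have wv: "w \<bullet> \<alpha> - (1 + t) * c = (1 + t) * (vp - c)" unfolding vp_def using tpos by (simp add: field_simps)
    have R0: "0 \<le> (1 + t) * Q \<alpha>" using Qnn tpos by simp
    show ?thesis
    proof (cases "r \<alpha> \<le> c")
      case False
      then show ?thesis using R0 by (simp add: \<psi>_def)
    next
      case rc: True
      show ?thesis
      proof (cases "vp < c")
        case True
        then have "w \<bullet> \<alpha> - (1 + t) * c \<le> 0" unfolding wv using tpos by (simp add: mult_nonneg_nonpos)
        then have "(w \<bullet> \<alpha> - (1 + t) * c) * \<psi> \<alpha> c \<le> 0" using psinn by (simp add: mult_nonpos_nonneg)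
        then show ?thesis using R0 by linarith
      next
        case False
        then have cv: "c \<le> vp" by simp
        have Qeq: "Q \<alpha> = integral {r \<alpha>..vp} (H \<alpha>)" using rc cv unfolding Q_def vp_def by simp
        have db: "(vp - c) * measure G {\<theta>\<in>space G. S \<alpha> (Xv \<mu> \<theta> \<alpha>) \<le> c} ^ m \<le> integral {r \<alpha>..vp} (H \<alpha>)"
        proof (rule down_bound[OF G_prob Xma[of \<alpha>] Smono])
          show "0 \<le> vp - c" using cv by simp
          show "0 \<le> integral {r \<alpha>..vp} (H \<alpha>)" by (rule int_nonneg[OF H0 Hmono])
          show "0 < m" by (rule m0)
          show "(vp - c) * measure G {\<theta> \<in> space G. Xv \<mu> \<theta> \<alpha> \<le> z} ^ m \<le> integral {r \<alpha>..vp} (H \<alpha>)"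
            if "S \<alpha> z \<le> c" for z
            using sgm_key[OF Hmono H0 that[unfolded S_def] rc cv] unfolding Hdef lam_eq .
          show "measure G {\<theta> \<in> space G. Xv \<mu> \<theta> \<alpha> \<le> \<omega>} = 1" using Lomega[OF aA] unfolding lam_eq .
        qed (use m0 in auto)
        have "(w \<bullet> \<alpha> - (1 + t) * c) * \<psi> \<alpha> c = (1 + t) * ((vp - c) * Pm \<alpha> c ^ m)"
          unfolding wv \<psi>_def using rc by simp
        also have "\<dots> \<le> (1 + t) * Q \<alpha>" unfolding Qeq Pm_def using db tpos by (intro mult_left_mono) auto
        finally show ?thesis .
      qed
    qed
  qed
  define bs where "bs \<alpha> = (if 0 < r \<alpha> \<and> r \<alpha> \<le> (w \<bullet> \<alpha>) / (1 + t) then S \<alpha> ((w \<bullet> \<alpha>) / (1 + t)) else 0)" for \<alpha>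
  have bs_nn: "0 \<le> bs \<alpha>" for \<alpha>
    unfolding bs_def S_def using sgm_ge[OF Hmono H0] by (auto intro: order.trans[OF less_imp_le])
  have bs_le: "bs \<alpha> \<le> max 0 ((w \<bullet> \<alpha>) / (1 + t))" for \<alpha>
    unfolding bs_def S_def using sgm_le[OF Hmono H0] by (auto simp: le_max_iff_disj)
  have LBpt: "(1 + t) * Q \<alpha> \<le> (w \<bullet> \<alpha> - (1 + t) * bs \<alpha>) * \<psi> \<alpha> (bs \<alpha>)" if aA: "\<alpha> \<in> A" for \<alpha>
  proof -
    define vp where "vp = (w \<bullet> \<alpha>) / (1 + t)"
    have r0: "0 < r \<alpha>" using r_pos aA by auto
    show ?thesis
    proof (cases "r \<alpha> \<le> vp")
      case False
      then show ?thesis using r0 unfolding Q_def bs_def \<psi>_def vp_def by auto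
    next
      case True
      define c where "c = S \<alpha> vp"
      have bsc: "bs \<alpha> = c" unfolding bs_def c_def vp_def using True r0 vp_def by simp
      have rc: "r \<alpha> \<le> c" unfolding c_def S_def by (rule sgm_ge[OF Hmono H0 True])
      have cv: "c \<le> vp" unfolding c_def S_def by (rule sgm_le[OF Hmono H0])
      have Qeq: "Q \<alpha> = integral {r \<alpha>..vp} (H \<alpha>)" using True unfolding Q_def vp_def by simp
      have opt: "(vp - c) * H \<alpha> vp = integral {r \<alpha>..vp} (H \<alpha>)"
        unfolding c_def S_def by (rule sgm_opt[OF Hmono H0 True])
      have sub: "{\<theta>\<in>space G. Xv \<mu> \<theta> \<alpha> \<le> vp} \<subseteq> {\<theta>\<in>space G. S \<alpha> (Xv \<mu> \<theta> \<alpha>) \<le> c}"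
        unfolding c_def using Smono[of \<alpha>] by (auto simp: monoD)
      have Sma: "(\<lambda>\<theta>. S \<alpha> (Xv \<mu> \<theta> \<alpha>)) \<in> borel_measurable G" using measurable_Pair2[OF betam, of \<alpha>] spF by simp
      have "lam_cdf G \<mu> \<alpha> vp \<le> Pm \<alpha> c"
        unfolding lam_eq Pm_def using sub Sma by (intro G.finite_measure_mono) auto
      then have HP: "H \<alpha> vp \<le> Pm \<alpha> c ^ m" unfolding Hdef by (intro power_mono) (auto simp: lam_cdf_def)
      have "(1 + t) * Q \<alpha> = (1 + t) * ((vp - c) * H \<alpha> vp)" using Qeq opt by simp
      also have "\<dots> \<le> (1 + t) * ((vp - c) * Pm \<alpha> c ^ m)"
        using HP cv tpos by (intro mult_left_mono) auto
      also have "\<dots> = (w \<bullet> \<alpha> - (1 + t) * bs \<alpha>) * \<psi> \<alpha> (bs \<alpha>)"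
        unfolding bsc \<psi>_def vp_def using rc tpos by (simp add: field_simps)
      finally show ?thesis .
    qed
  qed
  have AEA: "AE \<alpha> in F. \<alpha> \<in> A"
    using F_A by (intro F.AE_prob_1) (simp add: F.emeasure_eq_measure)
  have vp_bound: "0 \<le> (w \<bullet> \<alpha>) / (1 + t) \<and> (w \<bullet> \<alpha>) / (1 + t) \<le> w \<bullet> \<alpha> \<and> w \<bullet> \<alpha> \<le> \<omega>" if aA: "\<alpha> \<in> A" for \<alpha>
  proof -
    have ww: "w \<in> Theta_w U" using wB unfolding Theta_def Theta_w_def by auto
    have i0: "0 \<le> w \<bullet> \<alpha>" by (rule inner_nonneg[OF ww aA])
    have "(w \<bullet> \<alpha>) / (1 + t) \<le> w \<bullet> \<alpha>" using divide_left_mono[of 1 "1 + t" "w \<bullet> \<alpha>"] i0 t_nonneg by simp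
    then show ?thesis using i0 tpos omega_bound ww aA by auto
  qed
  have Qbound: "Q \<alpha> \<le> \<omega>" if aA: "\<alpha> \<in> A" for \<alpha>
  proof (cases "(w \<bullet> \<alpha>) / (1 + t) \<ge> r \<alpha>")
    case True
    have "integral {r \<alpha>..(w \<bullet> \<alpha>) / (1 + t)} (H \<alpha>) \<le> ((w \<bullet> \<alpha>) / (1 + t) - r \<alpha>) * H \<alpha> ((w \<bullet> \<alpha>) / (1 + t))"
      by (rule int_upper[OF Hmono True])
    also have "\<dots> \<le> ((w \<bullet> \<alpha>) / (1 + t) - r \<alpha>) * 1" using True H1 by (intro mult_left_mono) auto
    finally show ?thesis using True vp_bound[OF aA] r_pos aA unfolding Q_def by auto
  next
    case False then show ?thesis unfolding Q_def using omega_pos by simp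
  qed
  have Qint: "integrable F Q"
    by (rule F.integrable_const_bound[where B=\<omega>]) (use AEA Qbound Qnn in \<open>auto elim!: eventually_mono\<close>)
  have psi1: "\<psi> \<alpha> c \<le> 1" for \<alpha> c unfolding \<psi>_def Pm_def by (simp add: power_le_one)
  define \<Phi> where "\<Phi> b = (\<lambda>(\<alpha>, \<theta>s). (w \<bullet> \<alpha> - (1 + t) * b \<alpha>) *
          (if b \<alpha> \<ge> Max (insert (r \<alpha>) ((\<lambda>i. beta_fn n G r \<mu> (\<theta>s i) \<alpha>) ` {..<m})) then 1 else (0::real)))" for b
  have exp_eq: "exp_payoff n F G r \<mu> w t b = integral\<^sup>L (F \<Otimes>\<^sub>M M) (\<Phi> b)" for b
    unfolding exp_payoff_def \<Phi>_def M_def m_def ..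
  have comp: "(\<lambda>p. S (fst p) (Xv \<mu> (snd p i) (fst p))) \<in> borel_measurable (F \<Otimes>\<^sub>M M)" if i: "i \<in> {..<m}" for i
  proof -
    have "(\<lambda>p. (fst p, snd p i)) \<in> (F \<Otimes>\<^sub>M M) \<rightarrow>\<^sub>M (F \<Otimes>\<^sub>M G)"
    proof (intro measurable_Pair)
      show "(\<lambda>p. snd p i) \<in> (F \<Otimes>\<^sub>M M) \<rightarrow>\<^sub>M G"
        unfolding M_def by (rule measurable_compose[OF measurable_snd measurable_component_singleton[OF i]])
    qed simp
    from measurable_compose[OF this betam] show ?thesis by simp
  qed
  have Phim: "\<Phi> b \<in> borel_measurable (F \<Otimes>\<^sub>M M)" if bF[measurable]: "b \<in> borel_measurable F" for b
  proof -
    have pr[measurable]: "(\<lambda>p. \<forall>i\<in>{..<m}. S (fst p) (Xv \<mu> (snd p i) (fst p)) \<le> b (fst p)) \<in> measurable (F \<Otimes>\<^sub>M M) (count_space UNIV)"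
    proof (rule pred_intros_finite(3)[where P="\<lambda>p i. S (fst p) (Xv \<mu> (snd p i) (fst p)) \<le> b (fst p)"])
      fix i assume i: "i \<in> {..<m}"
      note comp[OF i, measurable]
      show "(\<lambda>p. S (fst p) (Xv \<mu> (snd p i) (fst p)) \<le> b (fst p)) \<in> measurable (F \<Otimes>\<^sub>M M) (count_space UNIV)" by measurable
    qed simp
    have "(\<lambda>p. (w \<bullet> fst p - (1 + t) * b (fst p)) * (if r (fst p) \<le> b (fst p) \<and> (\<forall>i\<in>{..<m}. S (fst p) (Xv \<mu> (snd p i) (fst p)) \<le> b (fst p)) then 1 else (0::real)))
        \<in> borel_measurable (F \<Otimes>\<^sub>M M)" by measurable
    moreover have "\<Phi> b = (\<lambda>p. (w \<bullet> fst p - (1 + t) * b (fst p)) * (if r (fst p) \<le> b (fst p) \<and> (\<forall>i\<in>{..<m}. S (fst p) (Xv \<mu> (snd p i) (fst p)) \<le> b (fst p)) then 1 else (0::real)))"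
      unfolding \<Phi>_def by (rule ext) (simp add: split_beta beta_eq Max_le_iff)
    ultimately show ?thesis by simp
  qed
  have inner2: "(\<integral>\<theta>s. \<Phi> b (\<alpha>, \<theta>s) \<partial>M) = (w \<bullet> \<alpha> - (1 + t) * b \<alpha>) * \<psi> \<alpha> (b \<alpha>)" for b \<alpha>
    unfolding \<Phi>_def prod.case by (rule inner)
  define V where "V = (1 + t) * integral\<^sup>L F Q"
  have V0: "0 \<le> V" unfolding V_def using tpos Qnn by (intro mult_nonneg_nonneg integral_nonneg_AE) auto
  have UB: "exp_payoff n F G r \<mu> w t b \<le> V" if bm: "b \<in> borel_measurable lebesgue" for b
  proof (cases "integrable (F \<Otimes>\<^sub>M M) (\<Phi> b)")
    case False
    then show ?thesis unfolding exp_eq using V0 by (simp add: not_integrable_integral_eq)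
  next
    case True
    have "exp_payoff n F G r \<mu> w t b = (\<integral>\<alpha>. (\<integral>\<theta>s. \<Phi> b (\<alpha>, \<theta>s) \<partial>M) \<partial>F)"
      unfolding exp_eq by (rule FM.integral_fst'[OF True, symmetric])
    also have "\<dots> \<le> (\<integral>\<alpha>. (1 + t) * Q \<alpha> \<partial>F)"
    proof (rule integral_mono_AE)
      show "integrable F (\<lambda>\<alpha>. \<integral>\<theta>s. \<Phi> b (\<alpha>, \<theta>s) \<partial>M)" by (rule FM.integrable_fst'[OF True])
      show "integrable F (\<lambda>\<alpha>. (1 + t) * Q \<alpha>)" using Qint by simp
      show "AE \<alpha> in F. (\<integral>\<theta>s. \<Phi> b (\<alpha>, \<theta>s) \<partial>M) \<le> (1 + t) * Q \<alpha>"
        using AEA by eventually_elim (simp add: inner2 UBpt)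
    qed
    finally show ?thesis unfolding V_def by simp
  qed
  have bsm: "bs \<in> borel_measurable F"
  proof -
    have "(\<lambda>\<alpha>. S \<alpha> ((w \<bullet> \<alpha>) / (1 + t))) \<in> borel_measurable F"
      using measurable_compose[OF vpm Sm] by simp
    then show ?thesis unfolding bs_def by measurable
  qed
  have bs_leb: "bs \<in> borel_measurable lebesgue" using bsm measurable_cong_sets[OF sF refl] by auto
  have Phis: "\<Phi> bs \<in> borel_measurable (F \<Otimes>\<^sub>M M)" by (rule Phim[OF bsm])
  have innerabs: "(\<integral>\<theta>s. norm (\<Phi> bs (\<alpha>, \<theta>s)) \<partial>M) = \<bar>w \<bullet> \<alpha> - (1 + t) * bs \<alpha>\<bar> * \<psi> \<alpha> (bs \<alpha>)" for \<alpha>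
  proof -
    have "(\<integral>\<theta>s. norm (\<Phi> bs (\<alpha>, \<theta>s)) \<partial>M) = (\<integral>\<theta>s. \<bar>w \<bullet> \<alpha> - (1 + t) * bs \<alpha>\<bar> *
          (if bs \<alpha> \<ge> Max (insert (r \<alpha>) ((\<lambda>i. beta_fn n G r \<mu> (\<theta>s i) \<alpha>) ` {..<m})) then 1 else 0) \<partial>M)"
      unfolding \<Phi>_def by (rule Bochner_Integration.integral_cong[OF refl]) (simp add: abs_mult)
    also have "\<dots> = \<bar>w \<bullet> \<alpha> - (1 + t) * bs \<alpha>\<bar> * \<psi> \<alpha> (bs \<alpha>)" by (rule inner)
    finally show ?thesis .
  qed
  have int_s: "integrable (F \<Otimes>\<^sub>M M) (\<Phi> bs)"
  proof (rule FM.Fubini_integrable[OF Phis])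
    have nm: "(\<lambda>p. norm (\<Phi> bs p)) \<in> borel_measurable (F \<Otimes>\<^sub>M M)" using Phis by measurable
    have "(\<lambda>\<alpha>. \<integral>\<theta>s. norm (\<Phi> bs (\<alpha>, \<theta>s)) \<partial>M) \<in> borel_measurable F"
      using M.borel_measurable_lebesgue_integral[of "\<lambda>\<alpha> \<theta>s. norm (\<Phi> bs (\<alpha>, \<theta>s))" F] nm by simp
    moreover have "AE \<alpha> in F. norm (\<integral>\<theta>s. norm (\<Phi> bs (\<alpha>, \<theta>s)) \<partial>M) \<le> 2 * \<omega>"
      using AEA
    proof eventually_elim
      case (elim \<alpha>)
      note vb = vp_bound[OF elim]
      have b1: "bs \<alpha> \<le> (w \<bullet> \<alpha>) / (1 + t)" using bs_le[of \<alpha>] vb by simp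
      have "(1 + t) * bs \<alpha> \<le> (1 + t) * ((w \<bullet> \<alpha>) / (1 + t))" using b1 tpos by (intro mult_left_mono) auto
      then have b2: "(1 + t) * bs \<alpha> \<le> w \<bullet> \<alpha>" using tpos by simp
      have b3: "0 \<le> (1 + t) * bs \<alpha>" using bs_nn tpos by simp
      have "\<bar>w \<bullet> \<alpha> - (1 + t) * bs \<alpha>\<bar> \<le> 2 * \<omega>" using b2 b3 vb by auto
      moreover have "\<bar>w \<bullet> \<alpha> - (1 + t) * bs \<alpha>\<bar> * \<psi> \<alpha> (bs \<alpha>) \<le> \<bar>w \<bullet> \<alpha> - (1 + t) * bs \<alpha>\<bar>"
        using psi1 psinn by (simp add: mult_left_le)
      ultimately show ?case unfolding innerabs using psinn[of \<alpha> "bs \<alpha>"] by (simp add: abs_mult)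
    qed
    ultimately show "integrable F (\<lambda>\<alpha>. \<integral>\<theta>s. norm (\<Phi> bs (\<alpha>, \<theta>s)) \<partial>M)"
      by (intro F.integrable_const_bound[where B="2 * \<omega>"]) auto
  next
    show "AE \<alpha> in F. integrable M (\<lambda>\<theta>s. \<Phi> bs (\<alpha>, \<theta>s))"
    proof (rule AE_I2)
      fix \<alpha> assume "\<alpha> \<in> space F"
      have mm: "(\<lambda>\<theta>s. \<Phi> bs (\<alpha>, \<theta>s)) \<in> borel_measurable M" using measurable_Pair2[OF Phis] spF by simp
      show "integrable M (\<lambda>\<theta>s. \<Phi> bs (\<alpha>, \<theta>s))"
        by (rule M.integrable_const_bound[where B="\<bar>w \<bullet> \<alpha> - (1 + t) * bs \<alpha>\<bar>", OF _ mm])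
           (auto simp: \<Phi>_def abs_mult)
    qed
  qed
  have LB: "V \<le> exp_payoff n F G r \<mu> w t bs"
  proof -
    have "V = (\<integral>\<alpha>. (1 + t) * Q \<alpha> \<partial>F)" unfolding V_def by simp
    also have "\<dots> \<le> (\<integral>\<alpha>. (\<integral>\<theta>s. \<Phi> bs (\<alpha>, \<theta>s) \<partial>M) \<partial>F)"
    proof (rule integral_mono_AE)
      show "integrable F (\<lambda>\<alpha>. \<integral>\<theta>s. \<Phi> bs (\<alpha>, \<theta>s) \<partial>M)" by (rule FM.integrable_fst'[OF int_s])
      show "integrable F (\<lambda>\<alpha>. (1 + t) * Q \<alpha>)" using Qint by simp
      show "AE \<alpha> in F. (1 + t) * Q \<alpha> \<le> (\<integral>\<theta>s. \<Phi> bs (\<alpha>, \<theta>s) \<partial>M)"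
        using AEA by eventually_elim (simp add: inner2 LBpt)
    qed
    also have "\<dots> = exp_payoff n F G r \<mu> w t bs"
      unfolding exp_eq by (rule FM.integral_fst'[OF int_s])
    finally show ?thesis .
  qed
  let ?B = "{b. b \<in> borel_measurable lebesgue \<and> (\<forall>\<alpha>. 0 \<le> b \<alpha>)}"
  have bsB: "bs \<in> ?B" using bs_leb bs_nn by simp
  have bdd: "bdd_above ((\<lambda>b. exp_payoff n F G r \<mu> w t b) ` ?B)"
    by (rule bdd_aboveI2[where M=V]) (use UB in auto)
  have "(SUP b \<in> ?B. exp_payoff n F G r \<mu> w t b) = V"
  proof (rule antisym)
    show "(SUP b \<in> ?B. exp_payoff n F G r \<mu> w t b) \<le> V"
      by (rule cSUP_least) (use bsB UB in auto)
    show "V \<le> (SUP b \<in> ?B. exp_payoff n F G r \<mu> w t b)"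
      using LB cSUP_upper[OF bsB bdd] by linarith
  qed
  moreover have "q_fn n F G r \<mu> w B t = V + t * B"
    unfolding q_fn_def V_def Q_def H_def by simp
  ultimately show ?thesis by simp
qed
end
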